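(* Let $\mathcal H=(M,n,\mathcal R)$ be a BMS, $x_0\in\mathbb R^n$ and $\gamma>0$. There exists an $\mathcal H$-closed convex polytope $P$ with $x_0\in P\subseteq \{y\in\mathbb R^n:\|y-x_0\|\le\gamma\}$ if and only if for every vector $v\in\mathbb R^n$ there is a mode $m\in M$ such that $v\cdot r\ge 0$ for all $r\in\mathcal R(m)$.
   Context: A multi-mode system is a tuple $\mathcal H=(M,n,\mathcal R)$ with $M$ a finite nonempty set of modes, $n\ge1$ variables, and $\mathcal R:M\to 2^{\mathbb R^n}$ giving nonempty rate sets; it is a BMS if each $\mathcal R(m)$ is a bounded convex polytope. A convex polytope $P\subseteq\mathbb R^n$ is $\mathcal H$-closed if for every vertex $c$ of $P$ there exist a mode $m\in M$ and $\tau>0$ such that $c+t\,r\in P$ for all $r\in\mathcal R(m)$ and all $t\in[0,\tau]$. $\|\cdot\|$ is the Euclidean norm and $\cdot$ the standard dot product. *)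

theory Defs
  imports "HOL-Analysis.Analysis"
begin

text \<open>A multi-mode system with mode set M (finite, nonempty) and rate sets R m in R^n
  (n = CARD('n)).\<close>
definition BMS :: "'m set \<Rightarrow> ('m \<Rightarrow> (real^'n) set) \<Rightarrow> bool" where
  "BMS M R \<longleftrightarrow> finite M \<and> M \<noteq> {} \<and> (\<forall>m\<in>M. R m \<noteq> {} \<and> polytope (R m))"

definition H_closed :: "'m set \<Rightarrow> ('m \<Rightarrow> (real^'n) set) \<Rightarrow> (real^'n) set \<Rightarrow> bool" where
  "H_closed M R P \<longleftrightarrow>
     (\<forall>c. c extreme_point_of P \<longrightarrow>
        (\<exists>m\<in>M. \<exists>\<tau>>0. \<forall>r\<in>R m. \<forall>t\<in>{0..\<tau>}. c + t *\<^sub>R r \<in> P))"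

end

theory Submission
  imports Defs
begin

lemma sum_upd:
  fixes G :: "(real^'n) set"
  assumes "finite G" "g \<in> G"
  shows "(\<Sum>h\<in>G. (\<sigma>(g := s)) h *\<^sub>R h) = (\<Sum>h\<in>G. \<sigma> h *\<^sub>R h) + (s - \<sigma> g) *\<^sub>R g"
proof -
  have "(\<Sum>h\<in>G. (\<sigma>(g := s)) h *\<^sub>R h) = s *\<^sub>R g + (\<Sum>h\<in>G-{g}. (\<sigma>(g := s)) h *\<^sub>R h)"
    using assms by (simp add: sum.remove)
  also have "(\<Sum>h\<in>G-{g}. (\<sigma>(g := s)) h *\<^sub>R h) = (\<Sum>h\<in>G-{g}. \<sigma> h *\<^sub>R h)"
    by (rule sum.cong) auto
  also have "(\<Sum>h\<in>G. \<sigma> h *\<^sub>R h) = \<sigma> g *\<^sub>R g + (\<Sum>h\<in>G-{g}. \<sigma> h *\<^sub>R h)"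
    using assms by (simp add: sum.remove)
  ultimately show ?thesis by (simp add: algebra_simps)
qed

lemma convex_shift_set:
  fixes P :: "(real^'n) set"
  assumes "convex P"
  shows "convex {r. c + t *\<^sub>R r \<in> P}"
  unfolding convex_def
proof (intro ballI allI impI, simp)
  fix x y :: "real^'n" and u v :: real
  assume h: "c + t *\<^sub>R x \<in> P" "c + t *\<^sub>R y \<in> P" "0 \<le> u" "0 \<le> v" "u + v = 1"
  have "u *\<^sub>R (c + t *\<^sub>R x) + v *\<^sub>R (c + t *\<^sub>R y) \<in> P"
    using assms h unfolding convex_def by blast
  moreover have "u *\<^sub>R (c + t *\<^sub>R x) + v *\<^sub>R (c + t *\<^sub>R y) = c + t *\<^sub>R (u *\<^sub>R x + v *\<^sub>R y)"
    using h(5) by (simp add: algebra_simps flip: scaleR_add_left)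
  ultimately show "c + t *\<^sub>R (u *\<^sub>R x + v *\<^sub>R y) \<in> P" by simp
qed

theorem lemma1:
  fixes M :: "'m set" and R :: "'m \<Rightarrow> (real^'n) set" and x0 :: "real^'n" and \<gamma> :: real
  assumes "BMS M R" and "\<gamma> > 0"
  shows "(\<exists>P. polytope P \<and> H_closed M R P \<and> x0 \<in> P \<and> P \<subseteq> cball x0 \<gamma>) \<longleftrightarrow>
         (\<forall>v::real^'n. \<exists>m\<in>M. \<forall>r\<in>R m. v \<bullet> r \<ge> 0)"
proof
  assume "\<exists>P. polytope P \<and> H_closed M R P \<and> x0 \<in> P \<and> P \<subseteq> cball x0 \<gamma>"
  then obtain P where P: "polytope P" "H_closed M R P" "x0 \<in> P" by blast
  show "\<forall>v::real^'n. \<exists>m\<in>M. \<forall>r\<in>R m. v \<bullet> r \<ge> 0"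
  proof
    fix v :: "real^'n"
    define E where "E = {x. x extreme_point_of P}"
    obtain S where S: "finite S" "P = convex hull S" using P(1) polytope_def by blast
    have PE: "P = convex hull E" using Krein_Milman_polytope[OF S(1)] S(2) E_def by simp
    have fE: "finite E" unfolding E_def
      by (rule finite_polyhedron_extreme_points[OF polytope_imp_polyhedron[OF P(1)]])
    have neE: "E \<noteq> {}" using PE P(3) by auto
    have "Min ((\<lambda>x. v \<bullet> x) ` E) \<in> (\<lambda>x. v \<bullet> x) ` E" using fE neE by simp
    then obtain c where c0: "c \<in> E" "v \<bullet> c = Min ((\<lambda>x. v \<bullet> x) ` E)" by auto
    have c: "c \<in> E" "\<forall>e\<in>E. v \<bullet> c \<le> v \<bullet> e"
      using c0 fE by auto
    have Psub: "P \<subseteq> {x. v \<bullet> c \<le> v \<bullet> x}"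
      unfolding PE by (rule hull_minimal) (use c(2) convex_halfspace_ge in auto)
    have "c extreme_point_of P" using c(1) E_def by simp
    then obtain m \<tau> where m: "m \<in> M" "\<tau> > 0" "\<forall>r\<in>R m. \<forall>t\<in>{0..\<tau>}. c + t *\<^sub>R r \<in> P"
      using P(2) unfolding H_closed_def by blast
    have "\<forall>r\<in>R m. v \<bullet> r \<ge> 0"
    proof
      fix r assume "r \<in> R m"
      then have "c + \<tau> *\<^sub>R r \<in> P" using m by auto
      then have "v \<bullet> c \<le> v \<bullet> c + \<tau> * (v \<bullet> r)" using Psub by (auto simp: inner_add_right)
      then show "v \<bullet> r \<ge> 0" using m(2) by (simp add: zero_le_mult_iff)
    qed
    then show "\<exists>m\<in>M. \<forall>r\<in>R m. v \<bullet> r \<ge> 0" using m(1) by blast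
  qed
next
  assume H: "\<forall>v::real^'n. \<exists>m\<in>M. \<forall>r\<in>R m. v \<bullet> r \<ge> 0"
  obtain V where V: "\<And>m. m \<in> M \<Longrightarrow> finite (V m) \<and> R m = convex hull (V m)"
    using assms(1) unfolding BMS_def polytope_def by metis
  have fM: "finite M" using assms(1) unfolding BMS_def by blast
  define G where "G = (\<Union>m\<in>M. V m)"
  have fG: "finite G" unfolding G_def using fM V by blast
  define K where "K = (\<Sum>g\<in>G. norm g)"
  have K0: "K \<ge> 0" unfolding K_def by (simp add: sum_nonneg)
  define \<epsilon> where "\<epsilon> = \<gamma> / (1 + K)"
  have \<epsilon>0: "\<epsilon> > 0" unfolding \<epsilon>_def using assms(2) K0 by simp
  have \<epsilon>K: "\<epsilon> * K \<le> \<gamma>"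
  proof -
    have "\<epsilon> * K \<le> \<epsilon> * (1 + K)" using \<epsilon>0 by simp
    also have "\<dots> = \<gamma>" unfolding \<epsilon>_def using K0 by simp
    finally show ?thesis .
  qed
  define F where "F = (\<lambda>\<sigma>. x0 + \<epsilon> *\<^sub>R (\<Sum>g\<in>G. \<sigma> g *\<^sub>R g))"
  define Sig where "Sig = PiE G (\<lambda>_. {-1::real, 1})"
  define S where "S = F ` Sig"
  define P where "P = convex hull S"
  have fS: "finite S" unfolding S_def Sig_def using fG by (simp add: finite_PiE)
  have polyP: "polytope P" unfolding P_def using fS by (simp add: polytope_def) blast
  have cvxP: "convex P" unfolding P_def by simp
  have SP: "S \<subseteq> P" unfolding P_def by (rule hull_subset)
  have upd: "\<sigma>(g := s) \<in> Sig" if "\<sigma> \<in> Sig" "g \<in> G" "s \<in> {-1,1}" for \<sigma> g s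
    using that unfolding Sig_def by (auto simp: PiE_def extensional_def Pi_def)
  have Fupd: "F (\<sigma>(g := s)) = F \<sigma> + (\<epsilon> * (s - \<sigma> g)) *\<^sub>R g" if "g \<in> G" for \<sigma> g s
  proof -
    have "F (\<sigma>(g := s)) = x0 + \<epsilon> *\<^sub>R ((\<Sum>h\<in>G. \<sigma> h *\<^sub>R h) + (s - \<sigma> g) *\<^sub>R g)"
      unfolding F_def using sum_upd[OF fG that, of \<sigma> s] by (simp del: fun_upd_apply)
    then show ?thesis unfolding F_def by (simp add: algebra_simps)
  qed
  have x0P: "x0 \<in> P"
  proof -
    define s1 where "s1 = (\<lambda>g. if g \<in> G then (1::real) else undefined)"
    define s2 where "s2 = (\<lambda>g. if g \<in> G then (-1::real) else undefined)"
    have "s1 \<in> Sig" "s2 \<in> Sig" unfolding Sig_def s1_def s2_def by auto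
    then have "F s1 \<in> P" "F s2 \<in> P" using SP unfolding S_def by auto
    then have "(1/2) *\<^sub>R F s1 + (1/2) *\<^sub>R F s2 \<in> P"
      using cvxP unfolding convex_def by (metis field_sum_of_halves divide_nonneg_nonneg zero_le_one zero_le_numeral)
    moreover have "(\<Sum>g\<in>G. s2 g *\<^sub>R g) = - (\<Sum>g\<in>G. s1 g *\<^sub>R g)"
      unfolding s1_def s2_def by (simp add: sum_negf[symmetric])
    then have "(1/2) *\<^sub>R F s1 + (1/2) *\<^sub>R F s2 = x0"
      unfolding F_def by (simp add: algebra_simps flip: scaleR_add_left)
    ultimately show ?thesis by simp
  qed
  have Pball: "P \<subseteq> cball x0 \<gamma>"
    unfolding P_def
  proof (rule hull_minimal)
    show "convex (cball x0 \<gamma>)" by simp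
    show "S \<subseteq> cball x0 \<gamma>"
    proof
      fix y assume "y \<in> S"
      then obtain \<sigma> where \<sigma>: "\<sigma> \<in> Sig" "y = F \<sigma>" unfolding S_def by auto
      have "norm (\<Sum>g\<in>G. \<sigma> g *\<^sub>R g) \<le> (\<Sum>g\<in>G. norm (\<sigma> g *\<^sub>R g))" by (rule norm_sum)
      also have "\<dots> = K" unfolding K_def
        by (rule sum.cong) (use \<sigma>(1) Sig_def in \<open>auto simp: PiE_def Pi_def\<close>)
      finally have "\<epsilon> * norm (\<Sum>g\<in>G. \<sigma> g *\<^sub>R g) \<le> \<epsilon> * K"
        using \<epsilon>0 by (simp add: mult_left_mono)
      then have "\<epsilon> * norm (\<Sum>g\<in>G. \<sigma> g *\<^sub>R g) \<le> \<gamma>" using \<epsilon>K by linarith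
      then show "y \<in> cball x0 \<gamma>"
        using \<sigma>(2) \<epsilon>0 unfolding F_def by (simp add: dist_norm)
    qed
  qed
  have HP: "H_closed M R P"
    unfolding H_closed_def
  proof (intro allI impI)
    fix c assume ext: "c extreme_point_of P"
    have "{c} face_of P" using ext face_of_singleton by blast
    then have "{c} exposed_face_of P"
      using exposed_face_of_polyhedron[OF polytope_imp_polyhedron[OF polyP]] by blast
    then obtain a b where ab: "P \<subseteq> {x. a \<bullet> x \<le> b}" "{c} = P \<inter> {x. a \<bullet> x = b}"
      unfolding exposed_face_of_def by blast
    have cS: "c \<in> S" using ext unfolding P_def by (rule extreme_point_of_convex_hull)
    then obtain \<sigma> where \<sigma>: "\<sigma> \<in> Sig" "c = F \<sigma>" unfolding S_def by auto
    obtain m where m: "m \<in> M" "\<forall>r\<in>R m. (-a) \<bullet> r \<ge> 0" using H by blast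
    have key: "c + t *\<^sub>R g \<in> P" if g: "g \<in> V m" and t: "t \<in> {0..2*\<epsilon>}" for g t
    proof (cases "g = 0")
      case True then show ?thesis using cS SP by auto
    next
      case False
      have gG: "g \<in> G" unfolding G_def using g m(1) by blast
      have "g \<in> R m" using V[OF m(1)] g hull_inc by metis
      then have ag: "a \<bullet> g \<le> 0" using m(2) by auto
      have sg: "\<sigma> g \<in> {-1,1}" using \<sigma>(1) gG unfolding Sig_def by auto
      have sm: "\<sigma> g = -1"
      proof (rule ccontr)
        assume "\<sigma> g \<noteq> -1"
        then have s1: "\<sigma> g = 1" using sg by auto
        have "F (\<sigma>(g := -1)) \<in> P" using upd[OF \<sigma>(1) gG] SP unfolding S_def by auto
        moreover have c'eq: "F (\<sigma>(g := -1)) = c - (2 * \<epsilon>) *\<^sub>R g"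
          using Fupd[OF gG, of \<sigma> "-1"] s1 \<sigma>(2) by (simp add: algebra_simps del: fun_upd_apply)
        ultimately have c'P: "c - (2 * \<epsilon>) *\<^sub>R g \<in> P" by simp
        have cb: "a \<bullet> c = b" using ab(2) by auto
        have "a \<bullet> (c - (2 * \<epsilon>) *\<^sub>R g) = b - 2 * \<epsilon> * (a \<bullet> g)"
          using cb by (simp add: inner_diff_right)
        moreover have "a \<bullet> (c - (2 * \<epsilon>) *\<^sub>R g) \<le> b" using c'P ab(1) by auto
        moreover have "2 * \<epsilon> * (a \<bullet> g) \<le> 0" using ag \<epsilon>0 by (simp add: mult_nonneg_nonpos)
        ultimately have "a \<bullet> (c - (2 * \<epsilon>) *\<^sub>R g) = b" by linarith
        then have "c - (2 * \<epsilon>) *\<^sub>R g \<in> {c}" using ab(2) c'P by blast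
        then show False using False \<epsilon>0 by simp
      qed
      have "F (\<sigma>(g := 1)) \<in> P" using upd[OF \<sigma>(1) gG] SP unfolding S_def by auto
      moreover have "F (\<sigma>(g := 1)) = c + (2 * \<epsilon>) *\<^sub>R g"
        using Fupd[OF gG, of \<sigma> "1"] sm \<sigma>(2) by (simp add: algebra_simps del: fun_upd_apply)
      ultimately have c''P: "c + (2 * \<epsilon>) *\<^sub>R g \<in> P" by simp
      have cP: "c \<in> P" using cS SP by auto
      define u where "u = t / (2 * \<epsilon>)"
      have u: "0 \<le> u" "u \<le> 1" unfolding u_def using t \<epsilon>0 by auto
      have "(1 - u) *\<^sub>R c + u *\<^sub>R (c + (2 * \<epsilon>) *\<^sub>R g) \<in> P"
        using cvxP cP c''P u unfolding convex_def by auto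
      moreover have "(1 - u) *\<^sub>R c + u *\<^sub>R (c + (2 * \<epsilon>) *\<^sub>R g) = c + t *\<^sub>R g"
        unfolding u_def using \<epsilon>0 by (simp add: algebra_simps)
      ultimately show ?thesis by simp
    qed
    have "\<forall>r\<in>R m. \<forall>t\<in>{0..2*\<epsilon>}. c + t *\<^sub>R r \<in> P"
    proof (intro ballI)
      fix r t assume r: "r \<in> R m" and t: "t \<in> {0..2*\<epsilon>}"
      have "convex hull (V m) \<subseteq> {r. c + t *\<^sub>R r \<in> P}"
        by (rule hull_minimal) (use key t convex_shift_set[OF cvxP] in auto)
      then show "c + t *\<^sub>R r \<in> P" using r V[OF m(1)] by auto
    qed
    then show "\<exists>m\<in>M. \<exists>\<tau>>0. \<forall>r\<in>R m. \<forall>t\<in>{0..\<tau>}. c + t *\<^sub>R r \<in> P"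
      using m(1) \<epsilon>0 by (intro bexI[of _ m] exI[of _ "2*\<epsilon>"]) auto
  qed
  show "\<exists>P. polytope P \<and> H_closed M R P \<and> x0 \<in> P \<and> P \<subseteq> cball x0 \<gamma>"
    using polyP HP x0P Pball by blast
qed

end
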